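(* Let $\Sigma$ be an alphabet and $(\mathcal{O},d)$ a pseudometric space. A bounded morphism $f : T \to T'$ in $\mathbf{TS}_{\Sigma}\mathcal{O}$ is $\mathbf{Lin}_{\Sigma}\mathcal{O}$-open if and only if the underlying morphism $Wf : WT \to WT'$ in $\mathbf{TS}_{\Sigma}$ is $\mathbf{Lin}_{\Sigma}$-open.
   Context: A (labelled) transition system over $\Sigma$ is a triple $(S,i,\Delta)$ with $S$ a set of states, $i\in S$ the initial state and $\Delta\subseteq S\times\Sigma\times S$. A morphism $(S,i,\Delta)\to(S',i',\Delta')$ is a function $f:S\to S'$ with $f(i)=i'$ and $(f(s),a,f(s'))\in\Delta'$ whenever $(s,a,s')\in\Delta$; these form the category $\mathbf{TS}_{\Sigma}$. For a word $w=a_1\cdots a_n\in\Sigma^*$, the finite linear system $L(w)$ has states $0,\dots,n$, initial state $0$ and transitions $(j-1,a_j,j)$; $\mathbf{Lin}_{\Sigma}$ is the full subcategory of $\mathbf{TS}_{\Sigma}$ on the $L(w)$, $w\in\Sigma^*$. A transition system with observations is a tuple $(S,i,\Delta,\omega)$ with $(S,i,\Delta)$ a transition system and $\omega:S\to\mathcal{O}$. An $\epsilon$-bounded morphism $(S,i,\Delta,\omega)\to(S',i',\Delta',\omega')$ is a morphism $f$ of the underlying transition systems with $d(\omega(s),\omega'(f(s)))\le\epsilon$ for all $s\in S$; a bounded morphism is an $\epsilon$-bounded one for some $\epsilon\ge0$. These form the category $\mathbf{TS}_{\Sigma}\mathcal{O}$, with forgetful functor $W:\mathbf{TS}_{\Sigma}\mathcal{O}\to\mathbf{TS}_{\Sigma}$.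 $\mathbf{Lin}_{\Sigma}\mathcal{O}$ is the full subcategory of $\mathbf{TS}_{\Sigma}\mathcal{O}$ of systems whose underlying transition system is finite linear. Given a category $\mathcal{M}$ and a subcategory $\mathcal{P}$, a morphism $f:X\to Y$ of $\mathcal{M}$ is $\mathcal{P}$-open if for every morphism $e:P\to P'$ in $\mathcal{P}$ and all morphisms $p:P\to X$, $q':P'\to Y$ of $\mathcal{M}$ with $f\circ p=q'\circ e$, there is a morphism $q:P'\to X$ of $\mathcal{M}$ with $q\circ e=p$ and $f\circ q=q'$. *)

theory Defs
  imports Complex_Main
begin

text \<open>Alphabet Sigma = the type 'l of labels. A transition system (S, i, Delta)
  with states of type 's.\<close>

type_synonym ('s, 'l) ts = "'s set \<times> 's \<times> ('s \<times> 'l \<times> 's) set"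

definition states :: "('s, 'l) ts \<Rightarrow> 's set" where "states T = fst T"
definition init :: "('s, 'l) ts \<Rightarrow> 's" where "init T = fst (snd T)"
definition trans :: "('s, 'l) ts \<Rightarrow> ('s \<times> 'l \<times> 's) set" where "trans T = snd (snd T)"

definition wf_ts :: "('s, 'l) ts \<Rightarrow> bool" where
  "wf_ts T \<longleftrightarrow> init T \<in> states T \<and> trans T \<subseteq> states T \<times> UNIV \<times> states T"

definition ts_mor :: "('s, 'l) ts \<Rightarrow> ('t, 'l) ts \<Rightarrow> ('s \<Rightarrow> 't) \<Rightarrow> bool" where
  "ts_mor T T' f \<longleftrightarrow> f ` states T \<subseteq> states T' \<and> f (init T) = init T' \<and>
     (\<forall>s a s'. (s, a, s') \<in> trans T \<longrightarrow> (f s, a, f s') \<in> trans T')"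

definition lin :: "'l list \<Rightarrow> (nat, 'l) ts" where
  "lin w = ({0..length w}, 0, {(j, w ! j, Suc j) | j. j < length w})"

definition pseudometric :: "('o \<Rightarrow> 'o \<Rightarrow> real) \<Rightarrow> bool" where
  "pseudometric d \<longleftrightarrow> (\<forall>x. d x x = 0) \<and> (\<forall>x y. 0 \<le> d x y) \<and> (\<forall>x y. d x y = d y x)
     \<and> (\<forall>x y z. d x z \<le> d x y + d y z)"

definition eps_mor :: "('o \<Rightarrow> 'o \<Rightarrow> real) \<Rightarrow> real \<Rightarrow> ('s, 'l) ts \<Rightarrow> ('s \<Rightarrow> 'o) \<Rightarrow>
    ('t, 'l) ts \<Rightarrow> ('t \<Rightarrow> 'o) \<Rightarrow> ('s \<Rightarrow> 't) \<Rightarrow> bool" where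
  "eps_mor d \<epsilon> T \<omega> T' \<omega>' f \<longleftrightarrow> ts_mor T T' f \<and> (\<forall>s\<in>states T. d (\<omega> s) (\<omega>' (f s)) \<le> \<epsilon>)"

definition bmor :: "('o \<Rightarrow> 'o \<Rightarrow> real) \<Rightarrow> ('s, 'l) ts \<Rightarrow> ('s \<Rightarrow> 'o) \<Rightarrow>
    ('t, 'l) ts \<Rightarrow> ('t \<Rightarrow> 'o) \<Rightarrow> ('s \<Rightarrow> 't) \<Rightarrow> bool" where
  "bmor d T \<omega> T' \<omega>' f \<longleftrightarrow> (\<exists>\<epsilon>\<ge>0. eps_mor d \<epsilon> T \<omega> T' \<omega>' f)"

definition lin_open :: "('a, 'l) ts \<Rightarrow> ('b, 'l) ts \<Rightarrow> ('a \<Rightarrow> 'b) \<Rightarrow> bool" where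
  "lin_open X Y f \<longleftrightarrow>
    (\<forall>(w::'l list) (w'::'l list) e p q'.
       ts_mor (lin w) (lin w') e \<and> ts_mor (lin w) X p \<and> ts_mor (lin w') Y q' \<and>
       (\<forall>s\<in>states (lin w). f (p s) = q' (e s)) \<longrightarrow>
       (\<exists>q. ts_mor (lin w') X q \<and> (\<forall>s\<in>states (lin w). q (e s) = p s) \<and>
            (\<forall>s\<in>states (lin w'). f (q s) = q' s)))"

text \<open>Lin_Sigma O-openness of a morphism f : (X,omX) -> (Y,omY) in TS_Sigma O
  (Lin_Sigma O is the full subcategory on linear systems with observations).\<close>
definition lin_obs_open :: "('o \<Rightarrow> 'o \<Rightarrow> real) \<Rightarrow> ('a, 'l) ts \<Rightarrow> ('a \<Rightarrow> 'o) \<Rightarrow>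
    ('b, 'l) ts \<Rightarrow> ('b \<Rightarrow> 'o) \<Rightarrow> ('a \<Rightarrow> 'b) \<Rightarrow> bool" where
  "lin_obs_open d X \<omega>X Y \<omega>Y f \<longleftrightarrow>
    (\<forall>(w::'l list) (\<omega>P::nat \<Rightarrow> 'o) (w'::'l list) (\<omega>P'::nat \<Rightarrow> 'o) e p q'.
       bmor d (lin w) \<omega>P (lin w') \<omega>P' e \<and> bmor d (lin w) \<omega>P X \<omega>X p \<and>
       bmor d (lin w') \<omega>P' Y \<omega>Y q' \<and>
       (\<forall>s\<in>states (lin w). f (p s) = q' (e s)) \<longrightarrow>
       (\<exists>q. bmor d (lin w') \<omega>P' X \<omega>X q \<and> (\<forall>s\<in>states (lin w). q (e s) = p s) \<and>
            (\<forall>s\<in>states (lin w'). f (q s) = q' s)))"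

end

theory Submission
  imports Defs
begin

theorem proposition2:
  fixes d :: "'o \<Rightarrow> 'o \<Rightarrow> real"
    and T :: "('a, 'l) ts" and \<omega> :: "'a \<Rightarrow> 'o"
    and T' :: "('b, 'l) ts" and \<omega>' :: "'b \<Rightarrow> 'o"
    and f :: "'a \<Rightarrow> 'b"
  assumes "pseudometric d"
    and "wf_ts T" and "wf_ts T'"
    and "bmor d T \<omega> T' \<omega>' f"
  shows "lin_obs_open d T \<omega> T' \<omega>' f \<longleftrightarrow> lin_open T T' f"
proof -
  obtain ef where ef0: "ef \<ge> 0" and fm: "ts_mor T T' f"
    and fb: "\<And>s. s \<in> states T \<Longrightarrow> d (\<omega> s) (\<omega>' (f s)) \<le> ef"
    using assms(4) unfolding bmor_def eps_mor_def by blast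
  have d0: "\<And>x. d x x = 0" and dsym: "\<And>x y. d x y = d y x"
    and dtri: "\<And>x y z. d x z \<le> d x y + d y z"
    using assms(1) unfolding pseudometric_def by blast+
  show ?thesis
  proof
    assume H: "lin_obs_open d T \<omega> T' \<omega>' f"
    show "lin_open T T' f"
      unfolding lin_open_def
    proof (intro allI impI, elim conjE)
      fix w w' :: "'l list" and e p q'
      assume e: "ts_mor (lin w) (lin w') e" and p: "ts_mor (lin w) T p"
        and q': "ts_mor (lin w') T' q'" and c: "\<forall>s\<in>states (lin w). f (p s) = q' (e s)"
      define oP where "oP = (\<lambda>s. \<omega> (p s))"
      define oP' where "oP' = (\<lambda>s. \<omega>' (q' s))"
      have b1: "bmor d (lin w) oP (lin w') oP' e"
        unfolding bmor_def eps_mor_def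
      proof (intro exI[of _ ef] conjI ballI)
        fix s assume s: "s \<in> states (lin w)"
        have "p s \<in> states T" using p s unfolding ts_mor_def by blast
        then show "d (oP s) (oP' (e s)) \<le> ef"
          using fb c s unfolding oP_def oP'_def by metis
      qed (use ef0 e in auto)
      have b2: "bmor d (lin w) oP T \<omega> p"
        unfolding bmor_def eps_mor_def oP_def using p d0 by auto
      have b3: "bmor d (lin w') oP' T' \<omega>' q'"
        unfolding bmor_def eps_mor_def oP'_def using q' d0 by auto
      from H b1 b2 b3 c obtain q where
        "bmor d (lin w') oP' T \<omega> q" "\<forall>s\<in>states (lin w). q (e s) = p s"
        "\<forall>s\<in>states (lin w'). f (q s) = q' s"
        unfolding lin_obs_open_def by blast
      then show "\<exists>q. ts_mor (lin w') T q \<and> (\<forall>s\<in>states (lin w). q (e s) = p s) \<and>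
            (\<forall>s\<in>states (lin w'). f (q s) = q' s)"
        unfolding bmor_def eps_mor_def by blast
    qed
  next
    assume H: "lin_open T T' f"
    show "lin_obs_open d T \<omega> T' \<omega>' f"
      unfolding lin_obs_open_def
    proof (intro allI impI, elim conjE)
      fix w w' :: "'l list" and oP oP' :: "nat \<Rightarrow> 'o" and e p q'
      assume e: "bmor d (lin w) oP (lin w') oP' e" and p: "bmor d (lin w) oP T \<omega> p"
        and q': "bmor d (lin w') oP' T' \<omega>' q'" and c: "\<forall>s\<in>states (lin w). f (p s) = q' (e s)"
      obtain e1 where e1: "e1 \<ge> 0" "ts_mor (lin w') T' q'"
        "\<And>s. s \<in> states (lin w') \<Longrightarrow> d (oP' s) (\<omega>' (q' s)) \<le> e1"
        using q' unfolding bmor_def eps_mor_def by blast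
      from H e p e1(2) c obtain q where q: "ts_mor (lin w') T q"
        "\<forall>s\<in>states (lin w). q (e s) = p s" "\<forall>s\<in>states (lin w'). f (q s) = q' s"
        unfolding lin_open_def bmor_def eps_mor_def by blast
      have "bmor d (lin w') oP' T \<omega> q"
        unfolding bmor_def eps_mor_def
      proof (intro exI[of _ "e1 + ef"] conjI ballI)
        fix s assume s: "s \<in> states (lin w')"
        have qs: "q s \<in> states T" using q(1) s unfolding ts_mor_def by blast
        have "d (oP' s) (\<omega> (q s)) \<le> d (oP' s) (\<omega>' (q' s)) + d (\<omega>' (q' s)) (\<omega> (q s))"
          by (rule dtri)
        also have "d (\<omega>' (q' s)) (\<omega> (q s)) \<le> ef"
          using fb[OF qs] q(3) s dsym by metis
        finally show "d (oP' s) (\<omega> (q s)) \<le> e1 + ef" using e1(3)[OF s] by linarith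
      qed (use e1 ef0 q in auto)
      then show "\<exists>q. bmor d (lin w') oP' T \<omega> q \<and> (\<forall>s\<in>states (lin w). q (e s) = p s) \<and>
            (\<forall>s\<in>states (lin w'). f (q s) = q' s)"
        using q by blast
    qed
  qed
qed

end
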